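(* Let $\alpha>0$ and $p>1$ be constants. For $\xi>0$, let $z$ be the solution of \[ z''+|x|^{\alpha}z^p=0,\qquad z(\xi)=1,\quad z'(\xi)=0. \] Let $a(\xi)$ denote the first root of $z$ greater than $\xi$, and $b(\xi)$ the first root of $z$ to the left of $\xi$. Assume that the equation $a(\xi)=-b(\xi)$ has a unique solution $\xi_0>0$. Then for any $\lambda>0$ the problem \[ u''+\lambda|x|^{\alpha}u^p=0\quad(-1<x<1),\qquad u(-1)=u(1)=0, \] has exactly three positive solutions: \begin{itemize} \item $u_1(x)$, which is an even function; \item $u_2(x)$, which has its point of maximum at $\xi=\xi_0/a(\xi_0)$; \item $u_3(x)=u_2(-x)$. \end{itemize} Moreover, if $m$ denotes the maximum value of $u_2$ (that is, $m=u_2(\xi)$), then $\lambda=a(\xi_0)^{\alpha+2}/m^{p-1}$. *)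

theory Defs
  imports "HOL-Analysis.Analysis"
begin

text \<open>The positive arc of the solution of z'' + |x|^alpha z^p = 0, z(xi) = 1, z'(xi) = 0:
  z is positive on the open interval (lo, hi) containing xi, solves the ODE there,
  and vanishes at lo and hi (so lo, hi are the first roots of z to the left/right of xi).\<close>
definition z_arc :: "real \<Rightarrow> real \<Rightarrow> real \<Rightarrow> (real \<Rightarrow> real) \<Rightarrow> real \<Rightarrow> real \<Rightarrow> bool" where
  "z_arc \<alpha> p \<xi> z lo hi \<longleftrightarrow>
     lo < \<xi> \<and> \<xi> < hi \<and> continuous_on {lo..hi} z \<and>
     (\<exists>z'. (\<forall>x\<in>{lo<..<hi}. z x > 0 \<and> (z has_real_derivative z' x) (at x) \<and>
              (z' has_real_derivative - (\<bar>x\<bar> powr \<alpha> * z x powr p)) (at x)) \<and>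
           z' \<xi> = 0) \<and>
     z \<xi> = 1 \<and> z lo = 0 \<and> z hi = 0"

definition a_root :: "real \<Rightarrow> real \<Rightarrow> real \<Rightarrow> real" where
  "a_root \<alpha> p \<xi> = (THE hi. \<exists>z lo. z_arc \<alpha> p \<xi> z lo hi)"

definition b_root :: "real \<Rightarrow> real \<Rightarrow> real \<Rightarrow> real" where
  "b_root \<alpha> p \<xi> = (THE lo. \<exists>z hi. z_arc \<alpha> p \<xi> z lo hi)"

definition pos_sol :: "real \<Rightarrow> real \<Rightarrow> real \<Rightarrow> (real \<Rightarrow> real) \<Rightarrow> bool" where
  "pos_sol \<alpha> p lam u \<longleftrightarrow>
     continuous_on {-1..1} u \<and> u (-1) = 0 \<and> u 1 = 0 \<and>
     (\<exists>u'. \<forall>x\<in>{-1<..<1}. u x > 0 \<and> (u has_real_derivative u' x) (at x) \<and>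
              (u' has_real_derivative - (lam * \<bar>x\<bar> powr \<alpha> * u x powr p)) (at x))"

end

theory Submission
  imports Defs
begin


lemma cmp_right:
  fixes \<psi> \<psi>' :: "real \<Rightarrow> real"
  assumes K: "K > 0" and at: "a \<le> t"
    and d: "\<And>s. a \<le> s \<Longrightarrow> s \<le> t \<Longrightarrow> (\<psi> has_real_derivative \<psi>' s) (at s) \<and> \<bar>\<psi>' s\<bar> \<le> M * exp (K * \<bar>s - a\<bar>)"
  shows "\<bar>\<psi> t - \<psi> a\<bar> \<le> M * exp (K * \<bar>t - a\<bar>) / K"
proof -
  have "\<bar>\<psi>' a\<bar> \<le> M" using d[of a] at by simp
  then have M: "M \<ge> 0" by linarith
  define \<Phi> where "\<Phi> s = M * exp (K * (s - a)) / K" for s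
  have dP: "(\<Phi> has_real_derivative M * exp (K * (s - a))) (at s)" for s
    unfolding \<Phi>_def using K
    by (auto intro!: derivative_eq_intros)
  have 1: "(\<Phi> a - \<psi> a) \<le> (\<Phi> t - \<psi> t)"
  proof (rule DERIV_nonneg_imp_nondecreasing[OF at])
    fix s assume s: "a \<le> s" "s \<le> t"
    show "\<exists>y. ((\<lambda>s. \<Phi> s - \<psi> s) has_real_derivative y) (at s) \<and> 0 \<le> y"
    proof -
      from d[OF s] have h1: "(\<psi> has_real_derivative \<psi>' s) (at s)" and h2: "\<bar>\<psi>' s\<bar> \<le> M * exp (K * \<bar>s - a\<bar>)" by auto
      show ?thesis using DERIV_diff[OF dP h1] h2 s by (intro exI[of _ "M * exp (K * (s - a)) - \<psi>' s"]) (auto simp: abs_if split: if_splits)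
    qed
  qed
  have 2: "(\<Phi> a + \<psi> a) \<le> (\<Phi> t + \<psi> t)"
  proof (rule DERIV_nonneg_imp_nondecreasing[OF at])
    fix s assume s: "a \<le> s" "s \<le> t"
    show "\<exists>y. ((\<lambda>s. \<Phi> s + \<psi> s) has_real_derivative y) (at s) \<and> 0 \<le> y"
    proof -
      from d[OF s] have h1: "(\<psi> has_real_derivative \<psi>' s) (at s)" and h2: "\<bar>\<psi>' s\<bar> \<le> M * exp (K * \<bar>s - a\<bar>)" by auto
      show ?thesis using DERIV_add[OF dP h1] h2 s by (intro exI[of _ "M * exp (K * (s - a)) + \<psi>' s"]) (auto simp: abs_if split: if_splits)
    qed
  qed
  have "\<Phi> a \<ge> 0" using M K unfolding \<Phi>_def by simp
  then show ?thesis using 1 2 at unfolding \<Phi>_def by (auto simp: abs_if)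
qed

lemma cmp_left:
  fixes \<psi> \<psi>' :: "real \<Rightarrow> real"
  assumes K: "K > 0" and at: "t \<le> a"
    and d: "\<And>s. t \<le> s \<Longrightarrow> s \<le> a \<Longrightarrow> (\<psi> has_real_derivative \<psi>' s) (at s) \<and> \<bar>\<psi>' s\<bar> \<le> M * exp (K * \<bar>s - a\<bar>)"
  shows "\<bar>\<psi> t - \<psi> a\<bar> \<le> M * exp (K * \<bar>t - a\<bar>) / K"
proof -
  have "\<bar>\<psi>' a\<bar> \<le> M" using d[of a] at by simp
  then have M: "M \<ge> 0" by linarith
  define \<Phi> where "\<Phi> s = M * exp (K * (a - s)) / K" for s
  have dP: "(\<Phi> has_real_derivative - (M * exp (K * (a - s)))) (at s)" for s
    unfolding \<Phi>_def using K
    by (auto intro!: derivative_eq_intros)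
  have 1: "(\<Phi> a - \<psi> a) \<le> (\<Phi> t - \<psi> t)"
  proof (rule DERIV_nonpos_imp_nonincreasing[OF at])
    fix s assume s: "t \<le> s" "s \<le> a"
    show "\<exists>y. ((\<lambda>s. \<Phi> s - \<psi> s) has_real_derivative y) (at s) \<and> y \<le> 0"
    proof -
      from d[OF s] have h1: "(\<psi> has_real_derivative \<psi>' s) (at s)" and h2: "\<bar>\<psi>' s\<bar> \<le> M * exp (K * \<bar>s - a\<bar>)" by auto
      show ?thesis using DERIV_diff[OF dP h1] h2 s by (intro exI[of _ "- (M * exp (K * (a - s))) - \<psi>' s"]) (auto simp: abs_if split: if_splits)
    qed
  qed
  have 2: "(\<Phi> a + \<psi> a) \<le> (\<Phi> t + \<psi> t)"
  proof (rule DERIV_nonpos_imp_nonincreasing[OF at])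
    fix s assume s: "t \<le> s" "s \<le> a"
    show "\<exists>y. ((\<lambda>s. \<Phi> s + \<psi> s) has_real_derivative y) (at s) \<and> y \<le> 0"
    proof -
      from d[OF s] have h1: "(\<psi> has_real_derivative \<psi>' s) (at s)" and h2: "\<bar>\<psi>' s\<bar> \<le> M * exp (K * \<bar>s - a\<bar>)" by auto
      show ?thesis using DERIV_add[OF dP h1] h2 s by (intro exI[of _ "- (M * exp (K * (a - s))) + \<psi>' s"]) (auto simp: abs_if split: if_splits)
    qed
  qed
  have "\<Phi> a \<ge> 0" using M K unfolding \<Phi>_def by simp
  then show ?thesis using 1 2 at unfolding \<Phi>_def by (auto simp: abs_if)
qed

lemma cmp:
  fixes \<psi> \<psi>' :: "real \<Rightarrow> real"
  assumes K: "K > 0"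
    and d: "\<And>s. min a t \<le> s \<Longrightarrow> s \<le> max a t \<Longrightarrow> (\<psi> has_real_derivative \<psi>' s) (at s) \<and> \<bar>\<psi>' s\<bar> \<le> M * exp (K * \<bar>s - a\<bar>)"
  shows "\<bar>\<psi> t - \<psi> a\<bar> \<le> M * exp (K * \<bar>t - a\<bar>) / K"
proof (cases "a \<le> t")
  case True
  then show ?thesis using cmp_right[OF K True, of \<psi> \<psi>' M] d by auto
next
  case False
  then show ?thesis using cmp_left[OF K, of t a \<psi> \<psi>' M] d by auto
qed

lemma antideriv:
  fixes f :: "real \<Rightarrow> real"
  assumes "continuous_on UNIV f"
  shows "\<exists>F. F a = c \<and> (\<forall>x. (F has_real_derivative f x) (at x))"
proof -
  obtain F where F: "\<And>x. (F has_vector_derivative f x) (at x)"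
    using einterval_antiderivative[of "-\<infinity>" "\<infinity>" f] assms
    by (auto simp: continuous_on_eq_continuous_at)
  show ?thesis
    by (rule exI[of _ "\<lambda>x. F x - F a + c"])
       (auto intro!: derivative_eq_intros F[unfolded has_real_derivative_iff_has_vector_derivative[symmetric]])
qed

lemma powr_lip:
  fixes a b B p :: real
  assumes "0 \<le> a" "0 \<le> b" "a \<le> B" "b \<le> B" "p \<ge> 1"
  shows "\<bar>a powr p - b powr p\<bar> \<le> p * B powr (p - 1) * \<bar>a - b\<bar>"
proof -
  have main: "y powr p - x powr p \<le> p * B powr (p - 1) * (y - x)" if xy: "0 \<le> x" "x < y" "y \<le> B" for x y
  proof -
    have "continuous_on {x..y} (\<lambda>t. t powr p)"
      using xy assms(5) by (intro continuous_on_powr') (auto intro!: continuous_intros)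
    moreover have "(\<lambda>t. t powr p) differentiable (at t)" if "x < t" "t < y" for t
      using has_real_derivative_powr[of t p] that xy real_differentiable_def by fastforce
    ultimately obtain l z where z: "x < z" "z < y" "DERIV (\<lambda>t. t powr p) z :> l"
      "y powr p - x powr p = (y - x) * l"
      using MVT[OF xy(2), of "\<lambda>t. t powr p"] by blast
    have "l = p * z powr (p - 1)"
      using DERIV_unique[OF z(3) has_real_derivative_powr[of z p]] z xy by auto
    moreover have "z powr (p - 1) \<le> B powr (p - 1)"
      using z xy assms(5) by (intro powr_mono2) auto
    ultimately show ?thesis using z xy assms(5)
      by (simp add: mult_left_mono mult.commute mult.left_commute)
  qed
  show ?thesis
  proof (cases a b rule: linorder_cases)
    case less
    have "a powr p \<le> b powr p" using less assms by (intro powr_mono2) auto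
    with main[of a b] assms less show ?thesis by (simp add: abs_if)
  next
    case greater
    have "b powr p \<le> a powr p" using greater assms by (intro powr_mono2) auto
    with main[of b a] assms greater show ?thesis by (simp add: abs_if)
  qed simp
qed



definition clp :: "real \<Rightarrow> real \<Rightarrow> real" where "clp R x = max (-R) (min R x)"
definition gG :: "real \<Rightarrow> real \<Rightarrow> real \<Rightarrow> real \<Rightarrow> real \<Rightarrow> real" where
  "gG \<alpha> p R x y = \<bar>clp R x\<bar> powr \<alpha> * (max 0 (min 1 y)) powr p"

lemma gG_nonneg: "gG \<alpha> p R x y \<ge> 0" unfolding gG_def by simp

lemma gG_le: assumes "\<alpha> > 0" "p > 0" "R > 0" shows "gG \<alpha> p R x y \<le> R powr \<alpha>"
proof -
  have "\<bar>clp R x\<bar> powr \<alpha> \<le> R powr \<alpha>" using assms unfolding clp_def by (intro powr_mono2) auto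
  moreover have "(max 0 (min 1 y)) powr p \<le> 1" using assms powr_mono2[of p "max 0 (min 1 y)" 1] by auto
  ultimately show ?thesis unfolding gG_def
    by (metis mult_mono' powr_ge_zero mult_1_right)
qed

lemma gG_lip: assumes "\<alpha> > 0" "p \<ge> 1" "R > 0"
  shows "\<bar>gG \<alpha> p R x y1 - gG \<alpha> p R x y2\<bar> \<le> R powr \<alpha> * p * \<bar>y1 - y2\<bar>"
proof -
  have a: "\<bar>clp R x\<bar> powr \<alpha> \<le> R powr \<alpha>" using assms unfolding clp_def by (intro powr_mono2) auto
  have b: "\<bar>(max 0 (min 1 y1)) powr p - (max 0 (min 1 y2)) powr p\<bar> \<le> p * 1 powr (p - 1) * \<bar>max 0 (min 1 y1) - max 0 (min 1 y2)\<bar>"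
    using assms by (intro powr_lip) auto
  have c: "\<bar>max 0 (min 1 y1) - max 0 (min 1 y2)\<bar> \<le> \<bar>y1 - y2\<bar>" by (auto simp: max_def min_def)
  have "p * \<bar>max 0 (min 1 y1) - max 0 (min 1 y2)\<bar> \<le> p * \<bar>y1 - y2\<bar>"
    using c assms by (intro mult_left_mono) auto
  then have b': "\<bar>(max 0 (min 1 y1)) powr p - (max 0 (min 1 y2)) powr p\<bar> \<le> p * \<bar>y1 - y2\<bar>"
    using b by simp
  have "\<bar>gG \<alpha> p R x y1 - gG \<alpha> p R x y2\<bar> = \<bar>clp R x\<bar> powr \<alpha> * \<bar>(max 0 (min 1 y1)) powr p - (max 0 (min 1 y2)) powr p\<bar>"
    unfolding gG_def by (simp add: abs_mult right_diff_distrib[symmetric])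
  also have "\<dots> \<le> R powr \<alpha> * (p * \<bar>y1 - y2\<bar>)"
    by (rule mult_mono[OF a b']) auto
  finally show ?thesis by simp
qed

lemma gG_cont: assumes "\<alpha> > 0" "p > 0" "continuous_on UNIV Y"
  shows "continuous_on UNIV (\<lambda>x. gG \<alpha> p R x (Y x))"
  unfolding gG_def clp_def using assms
  by (intro continuous_intros continuous_on_powr') auto

lemma ode2_exists:
  fixes f :: "real \<Rightarrow> real"
  assumes "continuous_on UNIV f"
  shows "\<exists>Y Y'. Y \<xi> = 1 \<and> Y' \<xi> = 0 \<and> (\<forall>x. (Y has_real_derivative Y' x) (at x) \<and> (Y' has_real_derivative - f x) (at x))"
proof -
  have "continuous_on UNIV (\<lambda>x. - f x)" using assms by (intro continuous_intros)
  then obtain F where F: "F \<xi> = 0" "\<And>x. (F has_real_derivative - f x) (at x)"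
    using antideriv by blast
  have "continuous_on UNIV F" using F(2)
    by (meson DERIV_isCont continuous_at_imp_continuous_on)
  then obtain G where G: "G \<xi> = 1" "\<And>x. (G has_real_derivative F x) (at x)"
    using antideriv by blast
  show ?thesis using F G by blast
qed

lemma cmp2:
  fixes D D' E :: "real \<Rightarrow> real"
  assumes K: "K > 0"
    and d: "\<And>x. (D has_real_derivative D' x) (at x)" "\<And>x. (D' has_real_derivative E x) (at x)"
    and E: "\<And>x. \<bar>E x\<bar> \<le> M * exp (K * \<bar>x - \<xi>\<bar>)"
    and i: "D' \<xi> = 0"
  shows "\<bar>D x - D \<xi>\<bar> \<le> M * exp (K * \<bar>x - \<xi>\<bar>) / K^2"
proof -
  have 1: "\<bar>D' s\<bar> \<le> (M / K) * exp (K * \<bar>s - \<xi>\<bar>)" for s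
    using cmp[OF K, of \<xi> s D' E M] d E i by auto
  show ?thesis
    using cmp[OF K, of \<xi> x D D' "M / K"] d 1 by (auto simp: power2_eq_square)
qed

definition solYY :: "(real \<Rightarrow> real) \<Rightarrow> real \<Rightarrow> (real \<Rightarrow> real) \<times> (real \<Rightarrow> real)" where
  "solYY f \<xi> = (SOME YY. fst YY \<xi> = 1 \<and> snd YY \<xi> = 0 \<and> (\<forall>x. (fst YY has_real_derivative snd YY x) (at x) \<and> (snd YY has_real_derivative - f x) (at x)))"

lemma solYY:
  assumes "continuous_on UNIV f"
  shows "fst (solYY f \<xi>) \<xi> = 1 \<and> snd (solYY f \<xi>) \<xi> = 0 \<and> (\<forall>x. (fst (solYY f \<xi>) has_real_derivative snd (solYY f \<xi>) x) (at x) \<and> (snd (solYY f \<xi>) has_real_derivative - f x) (at x))"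
proof -
  obtain Y Y' where "Y \<xi> = 1 \<and> Y' \<xi> = 0 \<and> (\<forall>x. (Y has_real_derivative Y' x) (at x) \<and> (Y' has_real_derivative - f x) (at x))"
    using ode2_exists[OF assms] by blast
  then have "\<exists>YY. fst YY \<xi> = 1 \<and> snd YY \<xi> = 0 \<and> (\<forall>x. (fst YY has_real_derivative snd YY x) (at x) \<and> (snd YY has_real_derivative - f x) (at x))"
    by (intro exI[of _ "(Y, Y')"]) auto
  then show ?thesis unfolding solYY_def by (rule someI_ex)
qed

lemma global_sol:
  assumes a: "\<alpha> > 0" and p: "p > 1" and R: "R > 0"
  shows "\<exists>Y Y'. Y \<xi> = 1 \<and> Y' \<xi> = 0 \<and> (\<forall>x. (Y has_real_derivative Y' x) (at x) \<and> (Y' has_real_derivative - gG \<alpha> p R x (Y x)) (at x))"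
proof -
  define L where "L = R powr \<alpha> * p"
  have L: "L \<ge> 0" unfolding L_def using p by simp
  define K where "K = L + 1"
  have K: "K > 0" using L unfolding K_def by simp
  have "K^2 = 2*L + (L^2 + 1)" unfolding K_def by (simp add: power2_eq_square algebra_simps)
  then have "2 * L \<le> K^2" by (simp add: add_increasing2)
  then have KL: "L / K^2 \<le> 1/2" using K by (simp add: divide_le_eq)
  define \<omega> where "\<omega> x = exp (K * \<bar>x - \<xi>\<bar>)" for x
  have \<omega>pos: "\<omega> x > 0" for x unfolding \<omega>_def by simp
  have \<omega>ge: "\<omega> x \<ge> 1" for x unfolding \<omega>_def using K by simp
  have \<omega>c: "continuous_on UNIV \<omega>" unfolding \<omega>_def by (intro continuous_intros)
  define fw where "fw w x = gG \<alpha> p R x (\<omega> x * apply_bcontfun w x)" for w :: "real \<Rightarrow>\<^sub>C real" and x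
  have fwc: "continuous_on UNIV (fw w)" for w unfolding fw_def
    using a p \<omega>c by (intro gG_cont continuous_intros) auto
  define Yw where "Yw w = fst (solYY (fw w) \<xi>)" for w
  define Yw' where "Yw' w = snd (solYY (fw w) \<xi>)" for w
  have Yw: "Yw w \<xi> = 1" "Yw' w \<xi> = 0" "\<And>x. (Yw w has_real_derivative Yw' w x) (at x)"
       "\<And>x. (Yw' w has_real_derivative - fw w x) (at x)" for w
    using solYY[OF fwc[of w], of \<xi>] unfolding Yw_def Yw'_def by auto
  have Ywc: "continuous_on UNIV (Yw w)" for w using Yw(3)
    by (meson DERIV_isCont continuous_at_imp_continuous_on)
  define B where "B = 1 + R powr \<alpha> / K^2"
  have Ybound: "\<bar>Yw w x / \<omega> x\<bar> \<le> B" for w x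
  proof -
    have "\<bar>Yw w x - Yw w \<xi>\<bar> \<le> R powr \<alpha> * \<omega> x / K^2"
      unfolding \<omega>_def
    proof (rule cmp2[OF K Yw(3) Yw(4) _ Yw(2)])
      fix x
      have 1: "fw w x \<le> R powr \<alpha>" "fw w x \<ge> 0" using gG_le[OF a _ R] gG_nonneg p unfolding fw_def by auto
      have "R powr \<alpha> * 1 \<le> R powr \<alpha> * exp (K * \<bar>x - \<xi>\<bar>)"
        using \<omega>ge[of x] unfolding \<omega>_def by (intro mult_left_mono) auto
      then show "\<bar>- fw w x\<bar> \<le> R powr \<alpha> * exp (K * \<bar>x - \<xi>\<bar>)" using 1 by simp
    qed
    then have "\<bar>Yw w x\<bar> \<le> 1 + R powr \<alpha> * \<omega> x / K^2" using Yw(1)[of w] by linarith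
    moreover have "1 + R powr \<alpha> * \<omega> x / K^2 \<le> B * \<omega> x"
      unfolding B_def using \<omega>ge[of x] by (simp add: algebra_simps)
    ultimately have "\<bar>Yw w x\<bar> \<le> B * \<omega> x" by linarith
    then show ?thesis using \<omega>pos[of x] by (simp add: divide_le_eq)
  qed
  have inb: "(\<lambda>x. Yw w x / \<omega> x) \<in> bcontfun" for w
  proof (rule bcontfun_normI[where b=B])
    show "continuous_on UNIV (\<lambda>x. Yw w x / \<omega> x)"
      by (rule continuous_on_divide[OF Ywc \<omega>c]) (use \<omega>pos in \<open>auto simp: less_imp_neq[symmetric]\<close>)
    show "norm (Yw w x / \<omega> x) \<le> B" for x using Ybound[of w x] by simp
  qed
  define T where "T w = Bcontfun (\<lambda>x. Yw w x / \<omega> x)" for w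
  have Tapp: "apply_bcontfun (T w) x = Yw w x / \<omega> x" for w x
    unfolding T_def using inb[of w] by (simp add: Bcontfun_inverse)
  have contr: "dist (T w1) (T w2) \<le> (1/2) * dist w1 w2" for w1 w2
  proof (rule dist_bound)
    fix x
    have "\<bar>(Yw w1 x - Yw w2 x) - (Yw w1 \<xi> - Yw w2 \<xi>)\<bar> \<le> (L * dist w1 w2) * exp (K * \<bar>x - \<xi>\<bar>) / K^2"
    proof (rule cmp2[OF K])
      show "\<And>x. ((\<lambda>x. Yw w1 x - Yw w2 x) has_real_derivative Yw' w1 x - Yw' w2 x) (at x)"
        using Yw(3) by (intro DERIV_diff)
      show "\<And>x. ((\<lambda>x. Yw' w1 x - Yw' w2 x) has_real_derivative (- fw w1 x) - (- fw w2 x)) (at x)"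
        using Yw(4) by (intro DERIV_diff)
      show "Yw' w1 \<xi> - Yw' w2 \<xi> = 0" using Yw(2) by simp
      fix x
      have "\<bar>fw w1 x - fw w2 x\<bar> \<le> L * \<bar>\<omega> x * apply_bcontfun w1 x - \<omega> x * apply_bcontfun w2 x\<bar>"
        unfolding fw_def L_def using gG_lip[OF a _ R, of p] p by simp
      also have "\<dots> = L * \<omega> x * dist (apply_bcontfun w1 x) (apply_bcontfun w2 x)"
        using \<omega>pos[of x] by (simp add: dist_real_def abs_mult right_diff_distrib[symmetric])
      also have "\<dots> \<le> L * \<omega> x * dist w1 w2"
        using L \<omega>pos[of x] dist_bounded by (intro mult_left_mono) auto
      finally show "\<bar>(- fw w1 x) - (- fw w2 x)\<bar> \<le> L * dist w1 w2 * exp (K * \<bar>x - \<xi>\<bar>)"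
        unfolding \<omega>_def by (simp add: mult_ac)
    qed
    then have "\<bar>Yw w1 x - Yw w2 x\<bar> \<le> (L * dist w1 w2) * \<omega> x / K^2"
      using Yw(1) unfolding \<omega>_def by simp
    moreover have "(L * dist w1 w2) * \<omega> x / K^2 \<le> ((1/2) * dist w1 w2) * \<omega> x"
    proof -
      have "(L * dist w1 w2) * \<omega> x / K^2 = (L / K^2) * (dist w1 w2 * \<omega> x)" by simp
      also have "\<dots> \<le> (1/2) * (dist w1 w2 * \<omega> x)"
        using KL \<omega>pos[of x] by (intro mult_right_mono) auto
      finally show ?thesis by simp
    qed
    ultimately have h: "\<bar>Yw w1 x - Yw w2 x\<bar> \<le> ((1/2) * dist w1 w2) * \<omega> x" by linarith
    have "Yw w1 x / \<omega> x - Yw w2 x / \<omega> x = (Yw w1 x - Yw w2 x) / \<omega> x"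
      by (simp add: diff_divide_distrib)
    then show "dist (apply_bcontfun (T w1) x) (apply_bcontfun (T w2) x) \<le> (1/2) * dist w1 w2"
      unfolding Tapp dist_real_def using \<omega>pos[of x] h by (simp add: divide_le_eq)
  qed
  obtain w where w: "T w = w" using banach_fix_type[of "1/2" T] contr by auto
  have Yw_eq: "Yw w x = \<omega> x * apply_bcontfun w x" for x
  proof -
    have "apply_bcontfun w x = Yw w x / \<omega> x" using Tapp[of w x] w by simp
    then show ?thesis using \<omega>pos[of x] by (simp add: eq_divide_eq mult.commute)
  qed
  show ?thesis
    apply (rule exI[of _ "Yw w"], rule exI[of _ "Yw' w"])
    using Yw[of w] unfolding fw_def Yw_eq[symmetric] by auto
qed



lemma first_zero:
  fixes f :: "real \<Rightarrow> real"
  assumes "a \<le> b" "continuous_on {a..b} f" "f a > 0" "f b \<le> 0"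
  shows "\<exists>h. a < h \<and> h \<le> b \<and> f h = 0 \<and> (\<forall>t. a \<le> t \<longrightarrow> t < h \<longrightarrow> f t > 0)"
proof -
  define S where "S = {t \<in> {a..b}. f t \<le> 0}"
  have Sne: "b \<in> S" using assms unfolding S_def by auto
  have Sc: "closed S" unfolding S_def
    by (rule continuous_on_closed_Collect_le[OF assms(2) continuous_on_const closed_atLeastAtMost])
  have Sb: "bdd_below S" unfolding S_def by (auto intro: bdd_belowI[of _ a])
  define h where "h = Inf S"
  have hS: "h \<in> S" unfolding h_def using Sne Sc Sb closed_contains_Inf by blast
  have hle: "\<And>t. t \<in> S \<Longrightarrow> h \<le> t" unfolding h_def using Sb by (simp add: cInf_lower)
  have pos: "f t > 0" if "a \<le> t" "t < h" for t
  proof (rule ccontr)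
    assume "\<not> f t > 0"
    then have "t \<in> S" using that hS unfolding S_def by auto
    then show False using hle that by force
  qed
  have ha: "a < h" using hS assms(3) unfolding S_def by (cases "h = a") auto
  have "f h = 0"
  proof (rule ccontr)
    assume "f h \<noteq> 0"
    then have "f h < 0" using hS unfolding S_def by auto
    have "continuous_on {a..h} f" using assms(2) hS unfolding S_def by (auto intro: continuous_on_subset)
    then obtain t where t: "t \<in> {a..h}" "f t = 0"
      using IVT2'[of f h 0 a] \<open>f h < 0\<close> assms(3) ha by force
    then have "t < h" using \<open>f h \<noteq> 0\<close> by (cases "t = h") auto
    then show False using pos[of t] t by auto
  qed
  then show ?thesis using ha hS pos unfolding S_def by auto
qed

locale gsol =
  fixes \<alpha> p R \<xi> :: real and Y Y' :: "real \<Rightarrow> real"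
  assumes a: "\<alpha> > 0" and p: "p > 1" and R: "R > 0"
    and dY: "\<And>x. (Y has_real_derivative Y' x) (at x)"
    and dY': "\<And>x. (Y' has_real_derivative - gG \<alpha> p R x (Y x)) (at x)"
    and Y0: "Y \<xi> = 1" and Y'0: "Y' \<xi> = 0"
begin

lemma Y'_mono: "x \<le> y \<Longrightarrow> Y' y \<le> Y' x"
  by (rule DERIV_nonpos_imp_nonincreasing) (use dY' gG_nonneg in \<open>force\<close>)+

lemma Y_cont: "continuous_on S Y"
  by (meson DERIV_isCont continuous_at_imp_continuous_on dY)

lemma Y_decr: "\<xi> \<le> x \<Longrightarrow> x \<le> y \<Longrightarrow> Y y \<le> Y x"
  by (rule DERIV_nonpos_imp_nonincreasing) (use dY Y'_mono[of \<xi>] Y'0 in \<open>force\<close>)+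

lemma Y_le1: "Y x \<le> 1"
proof (cases "\<xi> \<le> x")
  case True then show ?thesis using Y_decr[of \<xi> x] Y0 by auto
next
  case False
  have "Y x \<le> Y \<xi>"
    by (rule DERIV_nonneg_imp_nondecreasing) (use False dY Y'_mono[of _ \<xi>] Y'0 in \<open>force\<close>)+
  then show ?thesis using Y0 by simp
qed

definition "t0 = max \<xi> 0 + 1"
definition "cc = (1/2) powr \<alpha> * (1/2) powr p"
definition "Xr = t0 + (t0 - \<xi>) + 2 / cc"

lemma cc_pos: "cc > 0" unfolding cc_def by simp
lemma cc2_pos: "2 / cc > 0" using cc_pos by simp

lemma right_neg:
  assumes Rt: "t0 \<le> R"
  shows "Y Xr \<le> 0"
proof -
  have t0x: "\<xi> < t0" "t0 \<ge> 1" "\<xi> + 1 \<le> t0" unfolding t0_def by auto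
  have Xt: "Xr - t0 \<ge> t0 - \<xi>" "Xr - t0 \<ge> 2 / cc" "t0 < Xr"
    unfolding Xr_def using cc2_pos t0x by linarith+
  show ?thesis
  proof (cases "Y t0 \<le> 1/2")
    case True
    obtain z where z: "\<xi> < z" "z < t0" "Y t0 - Y \<xi> = (t0 - \<xi>) * Y' z"
      using MVT2[OF t0x(1), of Y Y'] dY by blast
    have m: "(t0 - \<xi>) * Y' z \<le> -1/2" using z(3) True Y0 by simp
    have Yz: "Y' z \<le> (-1/2) / (t0 - \<xi>)" using m t0x by (subst pos_le_divide_eq) (auto simp: mult.commute)
    obtain z2 where z2: "t0 < z2" "z2 < Xr" "Y Xr - Y t0 = (Xr - t0) * Y' z2"
      using MVT2[OF Xt(3), of Y Y'] dY by blast
    have "Y' z2 \<le> Y' z" using Y'_mono z z2 by auto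
    then have Yz2: "Y' z2 \<le> (-1/2) / (t0 - \<xi>)" using Yz by linarith
    have neg: "(-1/2) / (t0 - \<xi>) < 0" using t0x by (simp add: divide_neg_pos)
    have "(Xr - t0) * Y' z2 \<le> (t0 - \<xi>) * ((-1/2) / (t0 - \<xi>))"
    proof -
      have "Y' z2 \<le> 0" using Yz2 neg by linarith
      then have "(Xr - t0) * Y' z2 \<le> (t0 - \<xi>) * Y' z2" using Xt(1) by (simp add: mult_right_mono_neg)
      also have "\<dots> \<le> (t0 - \<xi>) * ((-1/2) / (t0 - \<xi>))"
        using Yz2 t0x by (intro mult_left_mono) auto
      finally show ?thesis .
    qed
    also have "\<dots> = - 1 / 2" using t0x by simp
    finally show ?thesis using z2 True by linarith
  next
    case False
    have ge: "gG \<alpha> p R s (Y s) \<ge> cc" if s: "t0 - 1/2 \<le> s" "s \<le> t0" for s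
    proof -
      have "Y s \<ge> Y t0" using Y_decr[of s t0] s t0x by auto
      then have Ys: "Y s > 1/2" "Y s \<le> 1" using False Y_le1 by auto
      have cl: "clp R s = s" unfolding clp_def using s Rt t0x by auto
      have "gG \<alpha> p R s (Y s) = s powr \<alpha> * Y s powr p"
        unfolding gG_def cl using s t0x Ys by auto
      moreover have "(1/2) powr \<alpha> \<le> s powr \<alpha>" using s t0x a by (intro powr_mono2) auto
      moreover have "(1/2) powr p \<le> Y s powr p" using Ys p by (intro powr_mono2) auto
      ultimately show ?thesis unfolding cc_def by (simp add: mult_mono)
    qed
    have h: "t0 - 1/2 < t0" by simp
    obtain z where z: "t0 - 1/2 < z" "z < t0" "Y' t0 - Y' (t0 - 1/2) = (t0 - (t0 - 1/2)) * (- gG \<alpha> p R z (Y z))"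
      using MVT2[OF h, of Y' "\<lambda>x. - gG \<alpha> p R x (Y x)"] dY' by blast
    have "Y' (t0 - 1/2) \<le> 0" using Y'_mono[of \<xi> "t0 - 1/2"] Y'0 t0x by auto
    then have Yt0: "Y' t0 \<le> - cc / 2" using z ge[of z] by auto
    obtain z2 where z2: "t0 < z2" "z2 < Xr" "Y Xr - Y t0 = (Xr - t0) * Y' z2"
      using MVT2[OF Xt(3), of Y Y'] dY by blast
    have "Y' z2 \<le> - cc / 2" using Y'_mono[of t0 z2] z2 Yt0 by auto
    then have "(Xr - t0) * Y' z2 \<le> (2 / cc) * (- cc / 2)"
    proof -
      have n: "Y' z2 \<le> 0" using \<open>Y' z2 \<le> - cc / 2\<close> cc_pos by linarith
      have "(Xr - t0) * Y' z2 \<le> (2 / cc) * Y' z2" using mult_right_mono_neg[OF Xt(2) n] .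
      also have "\<dots> \<le> (2 / cc) * (- cc / 2)"
        using \<open>Y' z2 \<le> - cc / 2\<close> cc_pos by (intro mult_left_mono) auto
      finally show ?thesis .
    qed
    also have "\<dots> = -1" using cc_pos by simp
    finally show ?thesis using z2 Y_le1[of t0] by linarith
  qed
qed

lemma right_zero:
  assumes Rt: "t0 \<le> R"
  shows "\<exists>h. \<xi> < h \<and> h \<le> Xr \<and> Y h = 0 \<and> (\<forall>t. \<xi> \<le> t \<longrightarrow> t < h \<longrightarrow> Y t > 0)"
proof -
  have "\<xi> \<le> Xr" unfolding Xr_def t0_def using cc2_pos max.cobounded1[of \<xi> 0] by linarith
  then show ?thesis using first_zero[of \<xi> Xr Y] Y_cont right_neg[OF Rt] Y0 by auto
qed

end

lemma gsol_reflect: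
  assumes "gsol \<alpha> p R \<xi> Y Y'"
  shows "gsol \<alpha> p R (-\<xi>) (\<lambda>x. Y (-x)) (\<lambda>x. - Y' (-x))"
proof -
  interpret gsol \<alpha> p R \<xi> Y Y' by fact
  have cl: "\<bar>clp R (-x)\<bar> = \<bar>clp R x\<bar>" for x unfolding clp_def by auto
  show ?thesis
  proof
    fix x
    show "((\<lambda>x. Y (- x)) has_real_derivative - Y' (- x)) (at x)"
      using DERIV_chain2[OF dY[of "-x"] DERIV_minus[OF DERIV_ident]] by simp
    have "((\<lambda>x. Y' (- x)) has_real_derivative - gG \<alpha> p R (-x) (Y (-x)) * -1) (at x)"
      using DERIV_chain2[OF dY'[of "-x"] DERIV_minus[OF DERIV_ident]] by simp
    then show "((\<lambda>x. - Y' (- x)) has_real_derivative - gG \<alpha> p R x (Y (- x))) (at x)"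
      using DERIV_minus unfolding gG_def cl by fastforce
  qed (use a p R Y0 Y'0 in auto)
qed



definition XrF :: "real \<Rightarrow> real \<Rightarrow> real \<Rightarrow> real" where
  "XrF \<alpha> p \<xi> = (max \<xi> 0 + 1) + ((max \<xi> 0 + 1) - \<xi>) + 2 / ((1/2) powr \<alpha> * (1/2) powr p)"

lemma XrF_ge: fixes \<alpha> p \<xi> :: real shows "XrF \<alpha> p \<xi> \<ge> max \<xi> 0 + 1"
proof -
  have "2 / ((1/2) powr \<alpha> * (1/2) powr p) > 0" by simp
  then show ?thesis unfolding XrF_def using max.cobounded1[of \<xi> 0] by linarith
qed

lemma arc_exists:
  assumes a: "\<alpha> > 0" and p: "p > 1"
  shows "\<exists>z lo hi. z_arc \<alpha> p \<xi> z lo hi"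
proof -
  define R where "R = XrF \<alpha> p \<xi> + XrF \<alpha> p (-\<xi>) + 1"
  have X1: "XrF \<alpha> p \<xi> \<ge> 1" "XrF \<alpha> p (-\<xi>) \<ge> 1" using XrF_ge[where \<alpha>=\<alpha> and p=p and \<xi>=\<xi>] XrF_ge[where \<alpha>=\<alpha> and p=p and \<xi>="-\<xi>"] max.cobounded2[of 0 \<xi>] max.cobounded2[of 0 "-\<xi>"] by linarith+
  have R: "R > 0" unfolding R_def using X1 by linarith
  obtain Y Y' where Y: "Y \<xi> = 1" "Y' \<xi> = 0"
    "\<And>x. (Y has_real_derivative Y' x) (at x)" "\<And>x. (Y' has_real_derivative - gG \<alpha> p R x (Y x)) (at x)"
    using global_sol[OF a p R, of \<xi>] by blast
  interpret g: gsol \<alpha> p R \<xi> Y Y' using a p R Y by unfold_locales auto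
  interpret h: gsol \<alpha> p R "-\<xi>" "\<lambda>x. Y (-x)" "\<lambda>x. - Y' (-x)"
    by (rule gsol_reflect) unfold_locales
  have gX: "g.Xr = XrF \<alpha> p \<xi>" "g.t0 = max \<xi> 0 + 1"
    unfolding g.Xr_def g.t0_def g.cc_def XrF_def by simp_all
  have hX: "h.Xr = XrF \<alpha> p (-\<xi>)" "h.t0 = max (-\<xi>) 0 + 1"
    unfolding h.Xr_def h.t0_def h.cc_def XrF_def by simp_all
  have "g.t0 \<le> R" unfolding gX R_def using XrF_ge[where \<alpha>=\<alpha> and p=p and \<xi>=\<xi>] X1 by linarith
  then obtain hi where hi: "\<xi> < hi" "hi \<le> g.Xr" "Y hi = 0" "\<And>t. \<xi> \<le> t \<Longrightarrow> t < hi \<Longrightarrow> Y t > 0"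
    using g.right_zero by blast
  have "h.t0 \<le> R" unfolding hX R_def using XrF_ge[where \<alpha>=\<alpha> and p=p and \<xi>="-\<xi>"] X1 by linarith
  then obtain h' where h': "-\<xi> < h'" "h' \<le> h.Xr" "Y (-h') = 0" "\<And>t. -\<xi> \<le> t \<Longrightarrow> t < h' \<Longrightarrow> Y (-t) > 0"
    using h.right_zero by blast
  define lo where "lo = - h'"
  have pos: "Y x > 0" if "lo < x" "x < hi" for x
  proof (cases "\<xi> \<le> x")
    case True then show ?thesis using hi(4) that by auto
  next
    case False then show ?thesis using h'(4)[of "-x"] that unfolding lo_def by auto
  qed
  have bnd: "\<bar>x\<bar> \<le> R" if "lo < x" "x < hi" for x
    using that hi(2) h'(2) gX hX X1 unfolding lo_def R_def by auto
  show ?thesis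
  proof (intro exI)
    show "z_arc \<alpha> p \<xi> Y lo hi"
      unfolding z_arc_def
    proof (intro conjI exI[of _ Y'] ballI)
      show "lo < \<xi>" "\<xi> < hi" using h'(1) hi(1) unfolding lo_def by auto
      show "continuous_on {lo..hi} Y" by (rule g.Y_cont)
      show "Y' \<xi> = 0" "Y \<xi> = 1" "Y lo = 0" "Y hi = 0" using Y hi h' unfolding lo_def by auto
      fix x assume x: "x \<in> {lo<..<hi}"
      show "Y x > 0" using pos x by auto
      show "(Y has_real_derivative Y' x) (at x)" by (rule Y(3))
      have cl: "clp R x = x" unfolding clp_def using bnd[of x] x by auto
      have "gG \<alpha> p R x (Y x) = \<bar>x\<bar> powr \<alpha> * Y x powr p"
        unfolding gG_def cl using pos[of x] x g.Y_le1[of x] by (simp add: max_def min_def)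
      then show "(Y' has_real_derivative - (\<bar>x\<bar> powr \<alpha> * Y x powr p)) (at x)" using Y(4)[of x] by simp
    qed
  qed
qed



lemma uniq:
  fixes y1 y2 y1' y2' :: "real \<Rightarrow> real"
  assumes a: "\<alpha> > 0" and p: "p > 1"
    and s1: "\<And>x. x \<in> {lo<..<hi} \<Longrightarrow> y1 x > 0 \<and> (y1 has_real_derivative y1' x) (at x) \<and> (y1' has_real_derivative - (k * \<bar>x\<bar> powr \<alpha> * y1 x powr p)) (at x)"
    and s2: "\<And>x. x \<in> {lo<..<hi} \<Longrightarrow> y2 x > 0 \<and> (y2 has_real_derivative y2' x) (at x) \<and> (y2' has_real_derivative - (k * \<bar>x\<bar> powr \<alpha> * y2 x powr p)) (at x)"
    and \<xi>: "\<xi> \<in> {lo<..<hi}" and e0: "y1 \<xi> = y2 \<xi>" "y1' \<xi> = y2' \<xi>"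
    and t: "t \<in> {lo<..<hi}"
  shows "y1 t = y2 t"
proof -
  define J where "J = {min \<xi> t .. max \<xi> t}"
  have JI: "J \<subseteq> {lo<..<hi}" unfolding J_def using \<xi> t by auto
  have cJ: "compact J" unfolding J_def by simp
  have \<xi>J: "\<xi> \<in> J" and tJ: "t \<in> J" unfolding J_def by auto
  have cont: "continuous_on J f" if "\<And>x. x \<in> J \<Longrightarrow> (f has_real_derivative f' x) (at x)" for f f'
    using that by (meson DERIV_isCont continuous_at_imp_continuous_on)
  have c1: "continuous_on J y1" "continuous_on J y2" "continuous_on J y1'" "continuous_on J y2'"
    using cont[of y1 y1'] cont[of y2 y2'] cont[of y1' "\<lambda>x. - (k * \<bar>x\<bar> powr \<alpha> * y1 x powr p)"]
      cont[of y2' "\<lambda>x. - (k * \<bar>x\<bar> powr \<alpha> * y2 x powr p)"] s1 s2 JI by blast+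
  obtain B1 where B1: "\<And>x. x \<in> J \<Longrightarrow> norm (y1 x) \<le> B1"
    using compact_imp_bounded[OF compact_continuous_image[OF c1(1) cJ]] unfolding bounded_iff by auto
  obtain B2 where B2: "\<And>x. x \<in> J \<Longrightarrow> norm (y2 x) \<le> B2"
    using compact_imp_bounded[OF compact_continuous_image[OF c1(2) cJ]] unfolding bounded_iff by auto
  define B where "B = max B1 B2"
  define Cx where "Cx = \<bar>\<xi>\<bar> + \<bar>t\<bar>"
  define L where "L = \<bar>k\<bar> * Cx powr \<alpha> * (p * B powr (p - 1))"
  have L: "L \<ge> 0" unfolding L_def using p by simp
  have lip: "\<bar>k * \<bar>x\<bar> powr \<alpha> * y1 x powr p - k * \<bar>x\<bar> powr \<alpha> * y2 x powr p\<bar> \<le> L * \<bar>y1 x - y2 x\<bar>"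
    if x: "x \<in> J" for x
  proof -
    have pos: "y1 x > 0" "y2 x > 0" using s1 s2 JI x by blast+
    have yB: "y1 x \<le> B" "y2 x \<le> B" using B1[OF x] B2[OF x] unfolding B_def by auto
    have xb: "\<bar>x\<bar> powr \<alpha> \<le> Cx powr \<alpha>" unfolding Cx_def using x a unfolding J_def by (intro powr_mono2) auto
    have pl: "\<bar>y1 x powr p - y2 x powr p\<bar> \<le> p * B powr (p - 1) * \<bar>y1 x - y2 x\<bar>"
      using pos yB p by (intro powr_lip) auto
    have "\<bar>k * \<bar>x\<bar> powr \<alpha> * y1 x powr p - k * \<bar>x\<bar> powr \<alpha> * y2 x powr p\<bar>
        = \<bar>k\<bar> * \<bar>x\<bar> powr \<alpha> * \<bar>y1 x powr p - y2 x powr p\<bar>"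
      by (simp add: abs_mult right_diff_distrib[symmetric] mult.assoc)
    also have "\<dots> \<le> \<bar>k\<bar> * Cx powr \<alpha> * (p * B powr (p - 1) * \<bar>y1 x - y2 x\<bar>)"
      by (intro mult_mono mult_left_mono xb pl) auto
    finally show ?thesis unfolding L_def by (simp add: mult.assoc)
  qed
  define K where "K = 2 * (L + 1)"
  have K: "K > 0" unfolding K_def using L by simp
  define \<phi> where "\<phi> x = exp (- (K * \<bar>x - \<xi>\<bar>)) * (\<bar>y1 x - y2 x\<bar> + \<bar>y1' x - y2' x\<bar>)" for x
  have c\<phi>: "continuous_on J \<phi>" unfolding \<phi>_def using c1 by (intro continuous_intros)
  obtain sm where sm: "sm \<in> J" "\<And>x. x \<in> J \<Longrightarrow> \<phi> x \<le> \<phi> sm"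
    using continuous_attains_sup[OF cJ _ c\<phi>] \<xi>J by blast
  define N where "N = \<phi> sm"
  have bnd: "\<bar>y1 x - y2 x\<bar> + \<bar>y1' x - y2' x\<bar> \<le> N * exp (K * \<bar>x - \<xi>\<bar>)" if x: "x \<in> J" for x
  proof -
    have "\<phi> x \<le> N" using sm x unfolding N_def by auto
    then have "exp (K * \<bar>x - \<xi>\<bar>) * \<phi> x \<le> exp (K * \<bar>x - \<xi>\<bar>) * N" by simp
    moreover have "exp (K * \<bar>x - \<xi>\<bar>) * \<phi> x = \<bar>y1 x - y2 x\<bar> + \<bar>y1' x - y2' x\<bar>"
      unfolding \<phi>_def by (simp add: exp_minus)
    ultimately show ?thesis by (metis mult.commute)
  qed
  have sub: "{min \<xi> x .. max \<xi> x} \<subseteq> J" if "x \<in> J" for x using that unfolding J_def by auto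
  have half: "\<phi> x \<le> N / 2" if x: "x \<in> J" for x
  proof -
    have e: "\<bar>(y1' x - y2' x) - (y1' \<xi> - y2' \<xi>)\<bar> \<le> (L * N) * exp (K * \<bar>x - \<xi>\<bar>) / K"
    proof (rule cmp[OF K])
      fix s assume s: "min \<xi> x \<le> s" "s \<le> max \<xi> x"
      then have sJ: "s \<in> J" using sub[OF x] by auto
      have "((\<lambda>x. y1' x - y2' x) has_real_derivative
          (- (k * \<bar>s\<bar> powr \<alpha> * y1 s powr p)) - (- (k * \<bar>s\<bar> powr \<alpha> * y2 s powr p))) (at s)"
        using s1[of s] s2[of s] sJ JI by (intro DERIV_diff) auto
      moreover have "\<bar>(- (k * \<bar>s\<bar> powr \<alpha> * y1 s powr p)) - (- (k * \<bar>s\<bar> powr \<alpha> * y2 s powr p))\<bar> \<le> (L * N) * exp (K * \<bar>s - \<xi>\<bar>)"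
      proof -
        have "\<bar>(- (k * \<bar>s\<bar> powr \<alpha> * y1 s powr p)) - (- (k * \<bar>s\<bar> powr \<alpha> * y2 s powr p))\<bar> \<le> L * \<bar>y1 s - y2 s\<bar>"
          using lip[OF sJ] by simp
        also have "\<dots> \<le> L * (N * exp (K * \<bar>s - \<xi>\<bar>))"
          using bnd[OF sJ] L by (intro mult_left_mono) auto
        finally show ?thesis by (simp add: mult.assoc)
      qed
      ultimately show "((\<lambda>x. y1' x - y2' x) has_real_derivative (- (k * \<bar>s\<bar> powr \<alpha> * y1 s powr p)) - (- (k * \<bar>s\<bar> powr \<alpha> * y2 s powr p))) (at s) \<and>
          \<bar>(- (k * \<bar>s\<bar> powr \<alpha> * y1 s powr p)) - (- (k * \<bar>s\<bar> powr \<alpha> * y2 s powr p))\<bar> \<le> (L * N) * exp (K * \<bar>s - \<xi>\<bar>)"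
        by blast
    qed
    have d: "\<bar>(y1 x - y2 x) - (y1 \<xi> - y2 \<xi>)\<bar> \<le> N * exp (K * \<bar>x - \<xi>\<bar>) / K"
    proof (rule cmp[OF K])
      fix s assume s: "min \<xi> x \<le> s" "s \<le> max \<xi> x"
      then have sJ: "s \<in> J" using sub[OF x] by auto
      have "((\<lambda>x. y1 x - y2 x) has_real_derivative y1' s - y2' s) (at s)"
        using s1[of s] s2[of s] sJ JI by (intro DERIV_diff) auto
      moreover have "\<bar>y1' s - y2' s\<bar> \<le> N * exp (K * \<bar>s - \<xi>\<bar>)" using bnd[OF sJ] by linarith
      ultimately show "((\<lambda>x. y1 x - y2 x) has_real_derivative y1' s - y2' s) (at s) \<and> \<bar>y1' s - y2' s\<bar> \<le> N * exp (K * \<bar>s - \<xi>\<bar>)"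
        by blast
    qed
    have sum: "\<bar>y1 x - y2 x\<bar> + \<bar>y1' x - y2' x\<bar> \<le> (N * (L + 1) / K) * exp (K * \<bar>x - \<xi>\<bar>)"
    proof -
      have "(N * (L + 1) / K) * exp (K * \<bar>x - \<xi>\<bar>) = N * exp (K * \<bar>x - \<xi>\<bar>) / K + L * N * exp (K * \<bar>x - \<xi>\<bar>) / K"
        using K by (simp add: field_simps)
      then show ?thesis using e d e0 by (simp add: mult.assoc)
    qed
    have "\<phi> x \<le> exp (- (K * \<bar>x - \<xi>\<bar>)) * ((N * (L + 1) / K) * exp (K * \<bar>x - \<xi>\<bar>))"
      unfolding \<phi>_def by (rule mult_left_mono[OF sum]) simp
    also have "\<dots> = N * (L + 1) / K" using K by (simp add: exp_minus field_simps)
    also have "\<dots> = N / 2" unfolding K_def using L by (simp add: field_simps)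
    finally show ?thesis .
  qed
  have "N \<le> N / 2" using half[OF sm(1)] unfolding N_def by simp
  then have "N \<le> 0" by simp
  then have "\<phi> t \<le> 0" using sm(2)[OF tJ] unfolding N_def by simp
  moreover have "\<phi> t \<ge> \<bar>y1 t - y2 t\<bar> * exp (- (K * \<bar>t - \<xi>\<bar>))" unfolding \<phi>_def by (simp add: mult.commute)
  moreover have "\<bar>y1 t - y2 t\<bar> * exp (- (K * \<bar>t - \<xi>\<bar>)) \<ge> 0" by simp
  ultimately have "\<bar>y1 t - y2 t\<bar> * exp (- (K * \<bar>t - \<xi>\<bar>)) = 0" by linarith
  then show ?thesis by simp
qed



lemma z_arc_D:
  assumes "z_arc \<alpha> p \<xi> z lo hi"
  obtains z' where "lo < \<xi>" "\<xi> < hi" "continuous_on {lo..hi} z"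
    "\<And>x. x \<in> {lo<..<hi} \<Longrightarrow> z x > 0 \<and> (z has_real_derivative z' x) (at x) \<and>
              (z' has_real_derivative - (1 * \<bar>x\<bar> powr \<alpha> * z x powr p)) (at x)"
    "z' \<xi> = 0" "z \<xi> = 1" "z lo = 0" "z hi = 0"
proof -
  from assms obtain z' where h: "\<forall>x\<in>{lo<..<hi}. z x > 0 \<and> (z has_real_derivative z' x) (at x) \<and>
              (z' has_real_derivative - (\<bar>x\<bar> powr \<alpha> * z x powr p)) (at x)" "z' \<xi> = 0"
    and o: "lo < \<xi>" "\<xi> < hi" "continuous_on {lo..hi} z" "z \<xi> = 1" "z lo = 0" "z hi = 0"
    unfolding z_arc_def by blast
  show ?thesis by (rule that[of z']) (use h o in auto)
qed

lemma z_arc_reflect: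
  assumes "z_arc \<alpha> p \<xi> z lo hi"
  shows "z_arc \<alpha> p (-\<xi>) (\<lambda>x. z (-x)) (-hi) (-lo)"
proof -
  obtain z' where z: "lo < \<xi>" "\<xi> < hi" "continuous_on {lo..hi} z"
    "\<And>x. x \<in> {lo<..<hi} \<Longrightarrow> z x > 0 \<and> (z has_real_derivative z' x) (at x) \<and>
              (z' has_real_derivative - (1 * \<bar>x\<bar> powr \<alpha> * z x powr p)) (at x)"
    "z' \<xi> = 0" "z \<xi> = 1" "z lo = 0" "z hi = 0"
    using z_arc_D[OF assms] by blast
  have c: "continuous_on {-hi..-lo} (\<lambda>x. z (-x))"
    by (rule continuous_on_compose2[OF z(3)]) (auto intro: continuous_intros)
  show ?thesis
    unfolding z_arc_def
  proof (intro conjI exI[of _ "\<lambda>x. - z' (-x)"] ballI c)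
    fix x assume x: "x \<in> {-hi<..<-lo}"
    then have mx: "-x \<in> {lo<..<hi}" by auto
    show "z (-x) > 0" using z(4)[OF mx] by auto
    have d1: "(z has_real_derivative z' (-x)) (at (-x))"
      and d2: "(z' has_real_derivative - (1 * \<bar>-x\<bar> powr \<alpha> * z (-x) powr p)) (at (-x))"
      using z(4)[OF mx] by auto
    show "((\<lambda>x. z (- x)) has_real_derivative - z' (- x)) (at x)"
      using DERIV_chain2[OF d1 DERIV_minus[OF DERIV_ident]] by simp
    have "((\<lambda>x. z' (- x)) has_real_derivative - (1 * \<bar>-x\<bar> powr \<alpha> * z (-x) powr p) * -1) (at x)"
      using DERIV_chain2[OF d2 DERIV_minus[OF DERIV_ident]] by simp
    then show "((\<lambda>x. - z' (- x)) has_real_derivative - (\<bar>x\<bar> powr \<alpha> * z (- x) powr p)) (at x)"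
      using DERIV_minus by fastforce
  qed (use z in auto)
qed

lemma arc_sol_eq:
  assumes a: "\<alpha> > 0" and p: "p > 1"
    and z1: "z_arc \<alpha> p \<xi> z1 lo1 hi1" and z2: "z_arc \<alpha> p \<xi> z2 lo2 hi2"
  shows "\<And>x. max lo1 lo2 < x \<Longrightarrow> x < min hi1 hi2 \<Longrightarrow> z1 x = z2 x"
proof -
  fix x assume x: "max lo1 lo2 < x" "x < min hi1 hi2"
  obtain z1' where A: "lo1 < \<xi>" "\<xi> < hi1" "continuous_on {lo1..hi1} z1"
    "\<And>x. x \<in> {lo1<..<hi1} \<Longrightarrow> z1 x > 0 \<and> (z1 has_real_derivative z1' x) (at x) \<and>
              (z1' has_real_derivative - (1 * \<bar>x\<bar> powr \<alpha> * z1 x powr p)) (at x)"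
    "z1' \<xi> = 0" "z1 \<xi> = 1"
    using z_arc_D[OF z1] by blast
  obtain z2' where B: "lo2 < \<xi>" "\<xi> < hi2" "continuous_on {lo2..hi2} z2"
    "\<And>x. x \<in> {lo2<..<hi2} \<Longrightarrow> z2 x > 0 \<and> (z2 has_real_derivative z2' x) (at x) \<and>
              (z2' has_real_derivative - (1 * \<bar>x\<bar> powr \<alpha> * z2 x powr p)) (at x)"
    "z2' \<xi> = 0" "z2 \<xi> = 1"
    using z_arc_D[OF z2] by blast
  show "z1 x = z2 x"
    by (rule uniq[OF a p, of "max lo1 lo2" "min hi1 hi2" z1 z1' 1 z2 z2' \<xi>])
       (use A B x in auto)
qed

lemma hi_not_less:
  assumes a: "\<alpha> > 0" and p: "p > 1"
    and z1: "z_arc \<alpha> p \<xi> z1 lo1 hi1" and z2: "z_arc \<alpha> p \<xi> z2 lo2 hi2"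
  shows "\<not> hi1 < hi2"
proof
  assume lt: "hi1 < hi2"
  obtain z1' where A: "lo1 < \<xi>" "\<xi> < hi1" "continuous_on {lo1..hi1} z1" "z1 hi1 = 0"
    using z_arc_D[OF z1] by blast
  obtain z2' where B: "lo2 < \<xi>" "\<xi> < hi2"
    "\<And>x. x \<in> {lo2<..<hi2} \<Longrightarrow> z2 x > 0 \<and> (z2 has_real_derivative z2' x) (at x) \<and>
              (z2' has_real_derivative - (1 * \<bar>x\<bar> powr \<alpha> * z2 x powr p)) (at x)"
    using z_arc_D[OF z2] by blast
  have "isCont z2 x" if x: "x \<in> {\<xi>..hi1}" for x
  proof -
    have "x \<in> {lo2<..<hi2}" using x A B lt by auto
    then show ?thesis using B(3) DERIV_isCont by blast
  qed
  then have c2: "continuous_on {\<xi>..hi1} z2" by (intro continuous_at_imp_continuous_on) auto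
  have c1: "continuous_on {\<xi>..hi1} z1" using A by (auto intro: continuous_on_subset)
  have cl: "closure {\<xi>..<hi1} = {\<xi>..hi1}" using A by simp
  have "(\<lambda>x. z1 x - z2 x) hi1 = 0"
  proof (rule continuous_constant_on_closure[where S="{\<xi>..<hi1}" and f="\<lambda>x. z1 x - z2 x"])
    show "continuous_on (closure {\<xi>..<hi1}) (\<lambda>x. z1 x - z2 x)" unfolding cl using c1 c2 by (intro continuous_intros)
    show "hi1 \<in> closure {\<xi>..<hi1}" unfolding cl using A by auto
    fix x assume "x \<in> {\<xi>..<hi1}"
    then show "z1 x - z2 x = 0" using arc_sol_eq[OF a p z1 z2, of x] A B lt by auto
  qed
  then have "z2 hi1 = 0" using A by simp
  moreover have "z2 hi1 > 0" using B(3)[of hi1] A lt B by auto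
  ultimately show False by simp
qed

lemma arc_unique:
  assumes a: "\<alpha> > 0" and p: "p > 1"
    and z1: "z_arc \<alpha> p \<xi> z1 lo1 hi1" and z2: "z_arc \<alpha> p \<xi> z2 lo2 hi2"
  shows "lo1 = lo2 \<and> hi1 = hi2 \<and> (\<forall>x\<in>{lo1..hi1}. z1 x = z2 x)"
proof -
  have h: "hi1 = hi2" using hi_not_less[OF a p z1 z2] hi_not_less[OF a p z2 z1] by linarith
  have "\<not> -lo1 < -lo2" "\<not> -lo2 < -lo1"
    using hi_not_less[OF a p z_arc_reflect[OF z1] z_arc_reflect[OF z2]]
      hi_not_less[OF a p z_arc_reflect[OF z2] z_arc_reflect[OF z1]] by auto
  then have l: "lo1 = lo2" by linarith
  have "z1 x = z2 x" if x: "x \<in> {lo1..hi1}" for x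
  proof (cases "x = lo1 \<or> x = hi1")
    case True
    then show ?thesis using z1 z2 h l unfolding z_arc_def by auto
  next
    case False
    then show ?thesis using arc_sol_eq[OF a p z1 z2, of x] x h l by auto
  qed
  then show ?thesis using h l by auto
qed

lemma roots:
  assumes a: "\<alpha> > 0" and p: "p > 1" and z: "z_arc \<alpha> p \<xi> z lo hi"
  shows "a_root \<alpha> p \<xi> = hi" "b_root \<alpha> p \<xi> = lo"
proof -
  show "a_root \<alpha> p \<xi> = hi" unfolding a_root_def
    by (rule the_equality) (use z arc_unique[OF a p] in blast)+
  show "b_root \<alpha> p \<xi> = lo" unfolding b_root_def
    by (rule the_equality) (use z arc_unique[OF a p] in blast)+
qed



lemma scale:
  fixes y y' :: "real \<Rightarrow> real"
  assumes A: "A > 0" and M: "M > 0"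
    and y: "\<And>x. x \<in> {lo<..<hi} \<Longrightarrow> y x > 0 \<and> (y has_real_derivative y' x) (at x) \<and> (y' has_real_derivative - (c * \<bar>x\<bar> powr \<alpha> * y x powr p)) (at x)"
    and x: "x \<in> {lo / A<..<hi / A}"
  shows "M * y (A * x) > 0 \<and> ((\<lambda>x. M * y (A * x)) has_real_derivative M * A * y' (A * x)) (at x) \<and>
    ((\<lambda>x. M * A * y' (A * x)) has_real_derivative - ((c * A powr (\<alpha> + 2) / M powr (p - 1)) * \<bar>x\<bar> powr \<alpha> * (M * y (A * x)) powr p)) (at x)"
proof -
  have Ax: "A * x \<in> {lo<..<hi}" using x A by (auto simp: divide_less_eq less_divide_eq mult.commute)
  have yA: "y (A * x) > 0" "(y has_real_derivative y' (A * x)) (at (A * x))"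
    "(y' has_real_derivative - (c * \<bar>A * x\<bar> powr \<alpha> * y (A * x) powr p)) (at (A * x))"
    using y[OF Ax] by auto
  have dA: "((\<lambda>x. A * x) has_real_derivative A) (at x)" by (auto intro!: derivative_eq_intros)
  have d1: "((\<lambda>x. y (A * x)) has_real_derivative y' (A * x) * A) (at x)"
    using DERIV_chain2[OF yA(2) dA] .
  have d2: "((\<lambda>x. y' (A * x)) has_real_derivative - (c * \<bar>A * x\<bar> powr \<alpha> * y (A * x) powr p) * A) (at x)"
    using DERIV_chain2[OF yA(3) dA] .
  have e1: "\<bar>A * x\<bar> powr \<alpha> = A powr \<alpha> * \<bar>x\<bar> powr \<alpha>" using A by (simp add: abs_mult powr_mult)
  have e2: "(M * y (A * x)) powr p = M powr p * y (A * x) powr p" using M yA(1) by (simp add: powr_mult)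
  have e3: "A powr (\<alpha> + 2) = A powr \<alpha> * (A * A)" using A by (simp add: powr_add power2_eq_square)
  have e4: "M powr p = M powr (p - 1) * M"
  proof -
    have "M powr p = M powr ((p - 1) + 1)" by simp
    also have "\<dots> = M powr (p - 1) * M" by (subst powr_add) (use M in simp)
    finally show ?thesis .
  qed
  have Mq: "M powr (p - 1) > 0" using M by simp
  have "- ((c * A powr (\<alpha> + 2) / M powr (p - 1)) * \<bar>x\<bar> powr \<alpha> * (M * y (A * x)) powr p)
      = M * A * (- (c * \<bar>A * x\<bar> powr \<alpha> * y (A * x) powr p) * A)"
    unfolding e1 e2 e3 e4 using Mq by (simp add: field_simps)
  moreover have "((\<lambda>x. M * A * y' (A * x)) has_real_derivative M * A * (- (c * \<bar>A * x\<bar> powr \<alpha> * y (A * x) powr p) * A)) (at x)"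
    by (rule DERIV_cmult[OF d2])
  moreover have "((\<lambda>x. M * y (A * x)) has_real_derivative M * A * y' (A * x)) (at x)"
    using DERIV_cmult[OF d1, of M] by (simp add: mult_ac)
  ultimately show ?thesis using M yA(1) by simp
qed

lemma arc_le1:
  assumes z: "z_arc \<alpha> p \<xi> z lo hi" and x: "x \<in> {lo..hi}"
  shows "z x \<le> 1"
proof -
  obtain z' where A: "lo < \<xi>" "\<xi> < hi"
    "\<And>x. x \<in> {lo<..<hi} \<Longrightarrow> z x > 0 \<and> (z has_real_derivative z' x) (at x) \<and>
              (z' has_real_derivative - (1 * \<bar>x\<bar> powr \<alpha> * z x powr p)) (at x)"
    "z' \<xi> = 0" "z \<xi> = 1" "z lo = 0" "z hi = 0"
    using z_arc_D[OF z] by blast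
  have mono: "z' v \<le> z' u" if "lo < u" "u \<le> v" "v < hi" for u v
  proof (rule DERIV_nonpos_imp_nonincreasing[OF that(2)])
    fix s assume s: "u \<le> s" "s \<le> v"
    then have "s \<in> {lo<..<hi}" using that by auto
    then show "\<exists>y. (z' has_real_derivative y) (at s) \<and> y \<le> 0"
      using A(3)[of s] by (intro exI[of _ "- (1 * \<bar>s\<bar> powr \<alpha> * z s powr p)"]) auto
  qed
  show ?thesis
  proof (cases "x = lo \<or> x = hi")
    case True then show ?thesis using A by auto
  next
    case False
    then have xi: "lo < x" "x < hi" using x by auto
    show ?thesis
    proof (cases "\<xi> \<le> x")
      case True
      have "z x \<le> z \<xi>"
        by (rule DERIV_nonpos_imp_nonincreasing[OF True])
           (use A(3) mono[of \<xi>] A(1,4) xi in \<open>force\<close>)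
      then show ?thesis using A by simp
    next
      case False
      have "z x \<le> z \<xi>"
        by (rule DERIV_nonneg_imp_nondecreasing) (use False A(3) mono[of _ \<xi>] A(2,4) xi in \<open>force\<close>)+
      then show ?thesis using A by simp
    qed
  qed
qed



lemma m_powr:
  fixes m q :: real
  assumes "q > 0" "m > 0"
  shows "(m powr q) powr (1 / q) = m" "(m powr (1 / q)) powr q = m"
  using assms by (simp_all add: powr_powr)

lemma arc_to_sol:
  assumes a: "\<alpha> > 0" and p: "p > 1" and z: "z_arc \<alpha> p \<xi> z (-A) A" and lam: "lam > 0"
  defines "m \<equiv> (A powr (\<alpha> + 2) / lam) powr (1 / (p - 1))"
  shows "pos_sol \<alpha> p lam (\<lambda>x. m * z (A * x)) \<and> lam = A powr (\<alpha> + 2) / m powr (p - 1) \<and> m > 0"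
proof -
  obtain z' where Z: "-A < \<xi>" "\<xi> < A" "continuous_on {-A..A} z"
    "\<And>x. x \<in> {-A<..<A} \<Longrightarrow> z x > 0 \<and> (z has_real_derivative z' x) (at x) \<and>
              (z' has_real_derivative - (1 * \<bar>x\<bar> powr \<alpha> * z x powr p)) (at x)"
    "z (-A) = 0" "z A = 0"
    using z_arc_D[OF z] by blast
  have A: "A > 0" using Z by linarith
  have m: "m > 0" unfolding m_def using A lam by simp
  have mp: "m powr (p - 1) = A powr (\<alpha> + 2) / lam"
    unfolding m_def using m_powr(2)[of "p - 1" "A powr (\<alpha> + 2) / lam"] p A lam by simp
  have lam_eq: "lam = A powr (\<alpha> + 2) / m powr (p - 1)" unfolding mp using lam A by simp
  have cont: "continuous_on {-1..1} (\<lambda>x. m * z (A * x))"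
  proof -
    have "continuous_on {-1..1} (\<lambda>x. z (A * x))"
      by (rule continuous_on_compose2[OF Z(3)]) (use A in \<open>auto intro!: continuous_intros simp: mult_le_cancel_left1\<close>)
    then show ?thesis by (intro continuous_intros)
  qed
  have "pos_sol \<alpha> p lam (\<lambda>x. m * z (A * x))"
    unfolding pos_sol_def
  proof (intro conjI cont exI[of _ "\<lambda>x. m * A * z' (A * x)"] ballI)
    show "m * z (A * -1) = 0" "m * z (A * 1) = 0" using Z by auto
    fix x :: real assume x: "x \<in> {-1<..<1}"
    have x': "x \<in> {-A / A<..<A / A}" using x A by simp
    note S = scale[OF A m Z(4) x']
    show "m * z (A * x) > 0" using S by auto
    show "((\<lambda>x. m * z (A * x)) has_real_derivative m * A * z' (A * x)) (at x)" using S by auto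
    show "((\<lambda>x. m * A * z' (A * x)) has_real_derivative - (lam * \<bar>x\<bar> powr \<alpha> * (m * z (A * x)) powr p)) (at x)"
      using S lam_eq by simp
  qed
  then show ?thesis using lam_eq m by simp
qed

lemma sol_to_arc:
  assumes a: "\<alpha> > 0" and p: "p > 1" and u: "pos_sol \<alpha> p lam u" and lam: "lam > 0"
  shows "\<exists>\<eta> k z. -1 < \<eta> \<and> \<eta> < 1 \<and> k > 0 \<and> z_arc \<alpha> p (k * \<eta>) z (-k) k \<and>
     (\<forall>x\<in>{-1..1}. u x = u \<eta> * z (k * x)) \<and> u \<eta> > 0 \<and> lam = k powr (\<alpha> + 2) / (u \<eta>) powr (p - 1)"
proof -
  obtain u' where U: "continuous_on {-1..1} u" "u (-1) = 0" "u 1 = 0"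
    "\<And>x. x \<in> {-1<..<1} \<Longrightarrow> u x > 0 \<and> (u has_real_derivative u' x) (at x) \<and>
              (u' has_real_derivative - (lam * \<bar>x\<bar> powr \<alpha> * u x powr p)) (at x)"
    using u unfolding pos_sol_def by blast
  obtain \<eta> where \<eta>: "-1 < \<eta>" "\<eta> < 1" "(*) (u' \<eta>) = (\<lambda>v. 0)"
  proof -
    have "\<exists>z. -1 < z \<and> z < 1 \<and> (*) (u' z) = (\<lambda>v. 0)"
    proof (rule Rolle_deriv[of "-1" 1 u])
      show "u (-1) = u 1" using U by simp
      show "continuous_on {-1..1} u" by (rule U(1))
      fix x :: real assume "-1 < x" "x < 1"
      then have "(u has_real_derivative u' x) (at x)" using U(4)[of x] by auto
      then show "(u has_derivative (*) (u' x)) (at x)"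
        by (simp add: has_field_derivative_def)
    qed simp
    then show ?thesis using that by blast
  qed
  have u'0: "u' \<eta> = 0" using fun_cong[OF \<eta>(3), of 1] by simp
  define m where "m = u \<eta>"
  have m: "m > 0" unfolding m_def using U(4)[of \<eta>] \<eta> by auto
  define k where "k = (lam * m powr (p - 1)) powr (1 / (\<alpha> + 2))"
  have k: "k > 0" unfolding k_def using lam m by simp
  have kp: "k powr (\<alpha> + 2) = lam * m powr (p - 1)"
    unfolding k_def using m_powr(2)[of "\<alpha> + 2" "lam * m powr (p - 1)"] a lam m by simp
  define z where "z y = (1 / m) * u ((1 / k) * y)" for y
  have ik: "1 / k > 0" "1 / m > 0" using k m by auto
  have coef: "lam * (1 / k) powr (\<alpha> + 2) / (1 / m) powr (p - 1) = 1"
  proof -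
    have "(1 / k) powr (\<alpha> + 2) = 1 / k powr (\<alpha> + 2)" using k by (simp add: powr_divide)
    moreover have "(1 / m) powr (p - 1) = 1 / m powr (p - 1)" using m by (simp add: powr_divide)
    ultimately show ?thesis unfolding kp using lam m by simp
  qed
  have cont: "continuous_on {-k..k} z"
  proof -
    have "continuous_on {-k..k} (\<lambda>x. u ((1 / k) * x))"
      by (rule continuous_on_compose2[OF U(1)]) (use k in \<open>auto intro!: continuous_intros simp: field_simps\<close>)
    then show ?thesis unfolding z_def by (intro continuous_intros)
  qed
  have arc: "z_arc \<alpha> p (k * \<eta>) z (-k) k"
    unfolding z_arc_def
  proof (intro conjI cont exI[of _ "\<lambda>y. (1 / m) * (1 / k) * u' ((1 / k) * y)"] ballI)
    show "- k < k * \<eta>" using mult_strict_left_mono[OF \<eta>(1) k] by simp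
    show "k * \<eta> < k" using mult_strict_left_mono[OF \<eta>(2) k] by simp
    show "(1 / m) * (1 / k) * u' ((1 / k) * (k * \<eta>)) = 0" using u'0 k by simp
    show "z (k * \<eta>) = 1" "z (-k) = 0" "z k = 0" unfolding z_def using U(2,3) k m m_def by auto
    fix y assume y: "y \<in> {-k<..<k}"
    have y': "y \<in> {-1 / (1 / k)<..<1 / (1 / k)}" using y k by simp
    note S = scale[OF ik(1) ik(2) U(4) y']
    show "z y > 0" using S unfolding z_def by auto
    show "(z has_real_derivative (1 / m) * (1 / k) * u' ((1 / k) * y)) (at y)" using S unfolding z_def by auto
    show "((\<lambda>y. (1 / m) * (1 / k) * u' ((1 / k) * y)) has_real_derivative - (\<bar>y\<bar> powr \<alpha> * z y powr p)) (at y)"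
      using S coef unfolding z_def by simp
  qed
  have ux: "u x = u \<eta> * z (k * x)" if "x \<in> {-1..1}" for x
    unfolding z_def m_def[symmetric] using m k by simp
  have "lam = k powr (\<alpha> + 2) / (u \<eta>) powr (p - 1)" unfolding kp m_def[symmetric] using m by simp
  then show ?thesis using \<eta> k arc ux m unfolding m_def by blast
qed

lemma arc_even_contra:
  assumes a: "\<alpha> > 0" and p: "p > 1" and z: "z_arc \<alpha> p \<xi> z (-A) A" and \<xi>: "\<xi> > 0"
    and ev: "\<And>y. y \<in> {-A..A} \<Longrightarrow> z (-y) = z y"
  shows False
proof -
  obtain z' where Z: "-A < \<xi>" "\<xi> < A"
    "\<And>x. x \<in> {-A<..<A} \<Longrightarrow> z x > 0 \<and> (z has_real_derivative z' x) (at x) \<and>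
              (z' has_real_derivative - (1 * \<bar>x\<bar> powr \<alpha> * z x powr p)) (at x)"
    "z' \<xi> = 0" "z \<xi> = 1"
    using z_arc_D[OF z] by blast
  have mono: "z' v \<le> z' u" if "-A < u" "u \<le> v" "v < A" for u v
  proof (rule DERIV_nonpos_imp_nonincreasing[OF that(2)])
    fix s assume s: "u \<le> s" "s \<le> v"
    then have "s \<in> {-A<..<A}" using that by auto
    then show "\<exists>y. (z' has_real_derivative y) (at s) \<and> y \<le> 0"
      using Z(3)[of s] by (intro exI[of _ "- (1 * \<bar>s\<bar> powr \<alpha> * z s powr p)"]) auto
  qed
  have zm: "z (-\<xi>) = 1" using ev[of \<xi>] Z by auto
  have "z' (-\<xi>) = 0"
  proof (rule DERIV_local_max)
    show "(z has_real_derivative z' (-\<xi>)) (at (-\<xi>))" using Z(3)[of "-\<xi>"] Z \<xi> by auto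
    show "0 < A - \<xi>" using Z by simp
    show "\<forall>y. \<bar>- \<xi> - y\<bar> < A - \<xi> \<longrightarrow> z y \<le> z (- \<xi>)"
    proof (intro allI impI)
      fix y assume "\<bar>- \<xi> - y\<bar> < A - \<xi>"
      then have "y \<in> {-A..A}" using \<xi> by auto
      then show "z y \<le> z (-\<xi>)" using arc_le1[OF z] zm by auto
    qed
  qed
  then have h0: "z' (\<xi> / 2) = 0"
    using mono[of "-\<xi>" "\<xi> / 2"] mono[of "\<xi> / 2" \<xi>] Z \<xi> by auto
  have lt: "\<xi> / 2 < \<xi>" using \<xi> by simp
  have dd: "(z' has_real_derivative - (1 * \<bar>x\<bar> powr \<alpha> * z x powr p)) (at x)" if "\<xi> / 2 \<le> x" "x \<le> \<xi>" for x
  proof -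
    have "x \<in> {-A<..<A}" using that Z \<xi> by auto
    then show ?thesis using Z(3) by blast
  qed
  obtain c where c: "\<xi> / 2 < c" "c < \<xi>" "z' \<xi> - z' (\<xi> / 2) = (\<xi> - \<xi> / 2) * (- (1 * \<bar>c\<bar> powr \<alpha> * z c powr p))"
    using MVT2[OF lt, of z' "\<lambda>x. - (1 * \<bar>x\<bar> powr \<alpha> * z x powr p)"] dd by blast
  have "z c > 0" using Z(3)[of c] c Z \<xi> by auto
  then have "\<bar>c\<bar> powr \<alpha> * z c powr p > 0" using c \<xi> by simp
  then show False using c Z(4) h0 \<xi> by (simp add: mult_less_0_iff)
qed



lemma scale_in:
  fixes A x :: real
  assumes "A > 0" "x \<in> {-1..1}"
  shows "A * x \<in> {-A..A}" "- (A * x) \<in> {-A..A}"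
proof -
  have "A * x \<le> A * 1" "A * (-1) \<le> A * x" using assms by (intro mult_left_mono; simp)+
  then show "A * x \<in> {-A..A}" "- (A * x) \<in> {-A..A}" by auto
qed

lemma m_det:
  fixes lam A m p \<alpha> :: real
  assumes "lam > 0" "A > 0" "m > 0" "p > 1" "lam = A powr (\<alpha> + 2) / m powr (p - 1)"
  shows "m = (A powr (\<alpha> + 2) / lam) powr (1 / (p - 1))"
proof -
  have "lam * m powr (p - 1) = A powr (\<alpha> + 2)" using assms by (simp add: field_simps)
  then have "m powr (p - 1) = A powr (\<alpha> + 2) / lam" using assms(1) by (simp add: eq_divide_eq mult.commute)
  then show ?thesis using m_powr(1)[of "p - 1" m] assms by simp
qed

theorem theorem6p1:
  fixes \<alpha> p \<xi>0 lam :: real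
  assumes "\<alpha> > 0" and "p > 1"
    and "\<xi>0 > 0" and "a_root \<alpha> p \<xi>0 = - b_root \<alpha> p \<xi>0"
    and "\<forall>\<xi>>0. a_root \<alpha> p \<xi> = - b_root \<alpha> p \<xi> \<longrightarrow> \<xi> = \<xi>0"
    and "lam > 0"
  shows "\<exists>u1 u2 u3.
           pos_sol \<alpha> p lam u1 \<and> pos_sol \<alpha> p lam u2 \<and> pos_sol \<alpha> p lam u3 \<and>
           (\<forall>x\<in>{-1..1}. u1 (-x) = u1 x) \<and>
           (\<forall>x\<in>{-1..1}. u2 x \<le> u2 (\<xi>0 / a_root \<alpha> p \<xi>0)) \<and>
           (\<forall>x\<in>{-1..1}. u3 x = u2 (-x)) \<and>
           (\<exists>x\<in>{-1..1}. u1 x \<noteq> u2 x) \<and> (\<exists>x\<in>{-1..1}. u1 x \<noteq> u3 x) \<and>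
           (\<exists>x\<in>{-1..1}. u2 x \<noteq> u3 x) \<and>
           (\<forall>u. pos_sol \<alpha> p lam u \<longrightarrow>
              (\<forall>x\<in>{-1..1}. u x = u1 x) \<or> (\<forall>x\<in>{-1..1}. u x = u2 x) \<or>
              (\<forall>x\<in>{-1..1}. u x = u3 x)) \<and>
           lam = a_root \<alpha> p \<xi>0 powr (\<alpha> + 2) / u2 (\<xi>0 / a_root \<alpha> p \<xi>0) powr (p - 1)"
proof -
  note a = assms(1) and p = assms(2) and \<xi>0 = assms(3) and lam = assms(6)
  obtain z0 lo0 hi0 where z0: "z_arc \<alpha> p \<xi>0 z0 lo0 hi0" using arc_exists[OF a p] by blast
  note r0 = roots[OF a p z0]
  define A0 where "A0 = hi0"
  have lo0: "lo0 = - A0" using assms(4) r0 unfolding A0_def by simp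
  have z0': "z_arc \<alpha> p \<xi>0 z0 (-A0) A0" using z0 unfolding lo0 A0_def by simp
  have A0: "A0 > 0" using z_arc_D[OF z0'] \<xi>0 by (metis less_trans)
  have aA0: "a_root \<alpha> p \<xi>0 = A0" using r0 A0_def by simp
  obtain z1 lo1 hi1 where z1: "z_arc \<alpha> p 0 z1 lo1 hi1" using arc_exists[OF a p] by blast
  have z1r: "z_arc \<alpha> p 0 (\<lambda>x. z1 (-x)) (-hi1) (-lo1)" using z_arc_reflect[OF z1] by (simp only: minus_zero)
  note U1 = arc_unique[OF a p z1 z1r]
  define A1 where "A1 = hi1"
  have lo1: "lo1 = - hi1" using U1 by blast
  have z1': "z_arc \<alpha> p 0 z1 (-A1) A1" using z1 unfolding A1_def lo1 .
  have A1: "A1 > 0" using z_arc_D[OF z1'] by (metis less_trans)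
  have ev1: "z1 (-y) = z1 y" if "y \<in> {-A1..A1}" for y
  proof -
    have "y \<in> {lo1..hi1}" using that unfolding lo1 A1_def .
    then have "z1 y = (\<lambda>x. z1 (-x)) y" using U1 by blast
    then show ?thesis by simp
  qed
  define m0 where "m0 = (A0 powr (\<alpha> + 2) / lam) powr (1 / (p - 1))"
  define m1 where "m1 = (A1 powr (\<alpha> + 2) / lam) powr (1 / (p - 1))"
  have S0: "pos_sol \<alpha> p lam (\<lambda>x. m0 * z0 (A0 * x))" "lam = A0 powr (\<alpha> + 2) / m0 powr (p - 1)" "m0 > 0"
    using arc_to_sol[OF a p z0' lam] unfolding m0_def by auto
  have S1: "pos_sol \<alpha> p lam (\<lambda>x. m1 * z1 (A1 * x))" "m1 > 0"
    using arc_to_sol[OF a p z1' lam] unfolding m1_def by auto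
  have z0r: "z_arc \<alpha> p (-\<xi>0) (\<lambda>x. z0 (-x)) (-A0) A0" using z_arc_reflect[OF z0'] by (simp only: minus_minus)
  have S3: "pos_sol \<alpha> p lam (\<lambda>x. m0 * z0 (- (A0 * x)))"
    using arc_to_sol[OF a p z0r lam] unfolding m0_def by auto
  define u1 where "u1 x = m1 * z1 (A1 * x)" for x
  define u2 where "u2 x = m0 * z0 (A0 * x)" for x
  define u3 where "u3 x = u2 (-x)" for x
  have u3eq: "u3 = (\<lambda>x. m0 * z0 (- (A0 * x)))" unfolding u3_def u2_def by auto
  have P1: "pos_sol \<alpha> p lam u1" using S1 unfolding u1_def by simp
  have P2: "pos_sol \<alpha> p lam u2" using S0 unfolding u2_def by simp
  have P3: "pos_sol \<alpha> p lam u3" using S3 unfolding u3eq by simp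
  have E1: "\<forall>x\<in>{-1..1}. u1 (-x) = u1 x"
  proof
    fix x :: real assume x: "x \<in> {-1..1}"
    show "u1 (-x) = u1 x" unfolding u1_def using ev1[OF scale_in(1)[OF A1 x]] by simp
  qed
  have u2max: "u2 (\<xi>0 / a_root \<alpha> p \<xi>0) = m0" unfolding aA0 u2_def using A0 z0' unfolding z_arc_def by auto
  have M2: "\<forall>x\<in>{-1..1}. u2 x \<le> u2 (\<xi>0 / a_root \<alpha> p \<xi>0)"
  proof
    fix x :: real assume x: "x \<in> {-1..1}"
    have "z0 (A0 * x) \<le> 1" using arc_le1[OF z0' scale_in(1)[OF A0 x]] .
    then have "m0 * z0 (A0 * x) \<le> m0 * 1" using S0(3) by (intro mult_left_mono) auto
    then show "u2 x \<le> u2 (\<xi>0 / a_root \<alpha> p \<xi>0)" unfolding u2max unfolding u2_def by simp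
  qed
  have noteven: "\<not> (\<forall>x\<in>{-1..1}. u2 (-x) = u2 x)"
  proof
    assume h: "\<forall>x\<in>{-1..1}. u2 (-x) = u2 x"
    have "z0 (-y) = z0 y" if y: "y \<in> {-A0..A0}" for y
    proof -
      have x: "y / A0 \<in> {-1..1}" using y A0 by (auto simp: divide_le_eq le_divide_eq)
      have "u2 (- (y / A0)) = u2 (y / A0)" using h x by auto
      then have "m0 * z0 (-y) = m0 * z0 y" unfolding u2_def using A0 by simp
      then show ?thesis using S0(3) by simp
    qed
    then show False using arc_even_contra[OF a p z0' \<xi>0] by blast
  qed
  have D12: "\<exists>x\<in>{-1..1}. u1 x \<noteq> u2 x"
  proof (rule ccontr)
    assume "\<not> ?thesis"
    then have h: "\<forall>x\<in>{-1..1}. u1 x = u2 x" by auto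
    have "\<forall>x\<in>{-1..1}. u2 (-x) = u2 x"
    proof
      fix x :: real assume x: "x \<in> {-1..1}"
      then have "-x \<in> {-1..1}" by auto
      then show "u2 (-x) = u2 x" using h x E1 by metis
    qed
    then show False using noteven by blast
  qed
  have D13: "\<exists>x\<in>{-1..1}. u1 x \<noteq> u3 x"
  proof (rule ccontr)
    assume "\<not> ?thesis"
    then have h: "\<forall>x\<in>{-1..1}. u1 x = u2 (-x)" unfolding u3_def by auto
    have "\<forall>x\<in>{-1..1}. u2 (-x) = u2 x"
    proof
      fix x :: real assume x: "x \<in> {-1..1}"
      then have mx: "-x \<in> {-1..1}" by auto
      have "u2 x = u1 (-x)" using h[rule_format, OF mx] by simp
      also have "\<dots> = u1 x" using E1 x by auto
      also have "\<dots> = u2 (-x)" using h x by auto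
      finally show "u2 (-x) = u2 x" by simp
    qed
    then show False using noteven by blast
  qed
  have D23: "\<exists>x\<in>{-1..1}. u2 x \<noteq> u3 x"
  proof (rule ccontr)
    assume "\<not> ?thesis"
    then have h: "\<forall>x\<in>{-1..1}. u2 x = u3 x" by blast
    have "\<forall>x\<in>{-1..1}. u2 (-x) = u2 x"
    proof
      fix x :: real assume x: "x \<in> {-1..1}"
      have "u2 x = u3 x" using h x by blast
      then show "u2 (-x) = u2 x" unfolding u3_def by (rule sym)
    qed
    then show False using noteven by blast
  qed
  have LAM: "lam = a_root \<alpha> p \<xi>0 powr (\<alpha> + 2) / u2 (\<xi>0 / a_root \<alpha> p \<xi>0) powr (p - 1)"
    unfolding u2max unfolding aA0 by (rule S0(2))
  have CL: "\<forall>u. pos_sol \<alpha> p lam u \<longrightarrow>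
              (\<forall>x\<in>{-1..1}. u x = u1 x) \<or> (\<forall>x\<in>{-1..1}. u x = u2 x) \<or> (\<forall>x\<in>{-1..1}. u x = u3 x)"
  proof (intro allI impI)
    fix u assume u: "pos_sol \<alpha> p lam u"
    obtain \<eta> k z where E: "-1 < \<eta>" "\<eta> < 1" "k > 0" "z_arc \<alpha> p (k * \<eta>) z (-k) k"
      "\<forall>x\<in>{-1..1}. u x = u \<eta> * z (k * x)" "u \<eta> > 0" "lam = k powr (\<alpha> + 2) / (u \<eta>) powr (p - 1)"
      using sol_to_arc[OF a p u lam] by blast
    define \<xi> where "\<xi> = k * \<eta>"
    have zx: "z_arc \<alpha> p \<xi> z (-k) k" using E(4) unfolding \<xi>_def .
    have mdet: "u \<eta> = (k powr (\<alpha> + 2) / lam) powr (1 / (p - 1))"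
      by (rule m_det[OF lam E(3) E(6) p E(7)])
    consider "\<xi> > 0" | "\<xi> < 0" | "\<xi> = 0" by linarith
    then show "(\<forall>x\<in>{-1..1}. u x = u1 x) \<or> (\<forall>x\<in>{-1..1}. u x = u2 x) \<or> (\<forall>x\<in>{-1..1}. u x = u3 x)"
    proof cases
      case 1
      have "a_root \<alpha> p \<xi> = - b_root \<alpha> p \<xi>" using roots[OF a p zx] by simp
      then have "\<xi> = \<xi>0" using assms(5) 1 by blast
      then have zx0: "z_arc \<alpha> p \<xi>0 z (-k) k" using zx by simp
      note UU = arc_unique[OF a p zx0 z0']
      have kA: "k = A0" using UU by simp
      have "\<forall>x\<in>{-1..1}. u x = u2 x"
      proof
        fix x :: real assume x: "x \<in> {-1..1}"
        have "z (k * x) = z0 (A0 * x)" using UU scale_in(1)[OF E(3) x] kA by auto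
        then show "u x = u2 x" using E(5) x mdet unfolding u2_def m0_def kA by simp
      qed
      then show ?thesis by simp
    next
      case 2
      have zr: "z_arc \<alpha> p (-\<xi>) (\<lambda>x. z (-x)) (-k) k" using z_arc_reflect[OF zx] by (simp only: minus_minus)
      have "a_root \<alpha> p (-\<xi>) = - b_root \<alpha> p (-\<xi>)" using roots[OF a p zr] by simp
      then have "-\<xi> = \<xi>0" using assms(5) 2 by auto
      then have zx0: "z_arc \<alpha> p \<xi>0 (\<lambda>x. z (-x)) (-k) k" using zr by simp
      note UU = arc_unique[OF a p zx0 z0']
      have kA: "k = A0" using UU by simp
      have "\<forall>x\<in>{-1..1}. u x = u3 x"
      proof
        fix x :: real assume x: "x \<in> {-1..1}"
        have UUz: "\<forall>y\<in>{-k..k}. (\<lambda>x. z (-x)) y = z0 y" using UU by blast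
        have "z (- (- (k * x))) = z0 (- (k * x))" using bspec[OF UUz scale_in(2)[OF E(3) x]] by simp
        then have "z (- (- (k * x))) = z0 (- (A0 * x))" using kA by simp
        then show "u x = u3 x" using E(5) x mdet unfolding u3_def u2_def m0_def kA by simp
      qed
      then show ?thesis by simp
    next
      case 3
      then have zx0: "z_arc \<alpha> p 0 z (-k) k" using zx by simp
      note UU = arc_unique[OF a p zx0 z1']
      have kA: "k = A1" using UU by simp
      have "\<forall>x\<in>{-1..1}. u x = u1 x"
      proof
        fix x :: real assume x: "x \<in> {-1..1}"
        have "z (k * x) = z1 (A1 * x)" using UU scale_in(1)[OF E(3) x] kA by auto
        then show "u x = u1 x" using E(5) x mdet unfolding u1_def m1_def kA by simp
      qed
      then show ?thesis by simp
    qed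
  qed
  show ?thesis
    by (rule exI[of _ u1], rule exI[of _ u2], rule exI[of _ u3])
       (intro conjI P1 P2 P3 E1 M2 D12 D13 D23 CL LAM; simp add: u3_def)
qed

end
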